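(* Let $A$ be a finite nonempty subset of $(0,\infty)$ and let $f:A\to[0,\infty)$. Let $f\circ f$ denote the function defined on $A_2=\{a\in A: f(a)\in A\}$ by $a\mapsto f(f(a))$, and let $h_f=\{(f(a)/a,\,a):a\in A\}$. Then $h_f=f\circ f$ (i.e. $\{(f(a)/a,a):a\in A\}=\{(a,f(f(a))):a\in A_2\}$) if and only if $A=\{1\}$ and $f(1)=1$, i.e. $f=\{(1,1)\}$.
   Context: For a function $f$ on a finite set $A\subset(0,\infty)$, the Hirsch function $h_f$ is defined exactly at the points $f(a)/a$, $a\in A$, and maps $f(a)/a$ to $a$. Equality of functions means same domain and same values. *)

theory Defs
  imports Main "HOL.Real"
begin

definition hirsch_graph :: "(real \<Rightarrow> real) \<Rightarrow> real set \<Rightarrow> (real \<times> real) set" where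
  "hirsch_graph f A = {(f a / a, a) | a. a \<in> A}"

definition comp_graph :: "(real \<Rightarrow> real) \<Rightarrow> real set \<Rightarrow> (real \<times> real) set" where
  "comp_graph f A = {(a, f (f a)) | a. a \<in> A \<and> f a \<in> A}"

end

theory Submission
  imports Defs Complex_Main
begin

lemma shift_sum:
  assumes "finite A" "inj_on f A" "f ` A = A"
  shows "(\<Sum>c\<in>A. F (f c)) = (\<Sum>c\<in>A. (F c :: real))"
proof -
  have "(\<Sum>c\<in>f ` A. F c) = (\<Sum>c\<in>A. F (f c))" using sum.reindex[OF assms(2)] by simp
  then show ?thesis using assms(3) by simp
qed

theorem theorem10:
  fixes A :: "real set" and f :: "real \<Rightarrow> real"
  assumes "finite A" and "A \<noteq> {}" and "\<forall>a\<in>A. a > 0"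
    and "\<forall>a\<in>A. f a \<ge> 0"
  shows "hirsch_graph f A = comp_graph f A \<longleftrightarrow> (A = {1} \<and> f 1 = 1)"
proof
  assume "A = {1} \<and> f 1 = 1"
  then show "hirsch_graph f A = comp_graph f A"
    unfolding hirsch_graph_def comp_graph_def by auto
next
  assume H: "hirsch_graph f A = comp_graph f A"
  define g where "g a = f a / a" for a
  have one: "g a \<in> A \<and> f (g a) \<in> A \<and> a = f (f (g a))" if "a \<in> A" for a
  proof -
    have "(f a / a, a) \<in> hirsch_graph f A" using that unfolding hirsch_graph_def by auto
    then have "(g a, a) \<in> comp_graph f A" using H g_def by simp
    then show ?thesis unfolding comp_graph_def by auto
  qed
  have ginj: "inj_on g A"
  proof (rule inj_onI)
    fix a b assume ab: "a \<in> A" "b \<in> A" "g a = g b"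
    have "a = f (f (g a))" using one[OF ab(1)] by blast
    also have "\<dots> = f (f (g b))" using ab(3) by simp
    also have "\<dots> = b" using one[OF ab(2)] by simp
    finally show "a = b" .
  qed
  have gA: "g ` A = A"
    using one by (intro card_subset_eq[OF assms(1)]) (auto simp: card_image[OF ginj])
  have fA: "f ` A \<subseteq> A"
  proof
    fix y assume "y \<in> f ` A"
    then obtain c where c: "c \<in> A" "y = f c" by blast
    then obtain a where "a \<in> A" "c = g a" using gA by blast
    then show "y \<in> A" using one c by blast
  qed
  have fsurj: "f ` A = A"
  proof
    show "A \<subseteq> f ` A"
    proof
      fix a assume "a \<in> A"
      then show "a \<in> f ` A" using one[of a] by auto
    qed
  qed (rule fA)
  have finj: "inj_on f A" by (rule finite_surj_inj[OF assms(1)]) (simp add: fsurj)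
  have rel: "f (f (f c)) = f (f c) * c" if "c \<in> A" for c
  proof -
    from that gA obtain a where a1: "a \<in> A" and a2: "c = g a" by blast
    have o: "a = f (f (g a))" using one[OF a1] by blast
    have e: "f (f c) = a" unfolding a2 using o by (rule sym)
    have "a > 0" using a1 assms(3) by blast
    then have fa: "f a = a * c" unfolding a2 g_def by simp
    show ?thesis unfolding e fa ..
  qed
  define x :: "real \<Rightarrow> real" where "x c = ln c" for c
  have Ain: "f c \<in> A" if "c \<in> A" for c using fA that by auto
  have rx: "x (f (f (f c))) = x (f (f c)) + x c" if "c \<in> A" for c
  proof -
    have p1: "f (f c) > 0" using Ain[OF Ain[OF that]] assms(3) by blast
    have p2: "c > 0" using that assms(3) by blast
    show ?thesis unfolding x_def rel[OF that] using p1 p2 by (simp add: ln_mult)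
  qed
  note sh = shift_sum[OF assms(1) finj fsurj]
  have sh2: "(\<Sum>c\<in>A. F (f (f c))) = (\<Sum>c\<in>A. (F c :: real))" for F
    using sh[of "\<lambda>c. F (f c)"] sh[of F] by simp
  have sh3: "(\<Sum>c\<in>A. F (f (f (f c)))) = (\<Sum>c\<in>A. (F c :: real))" for F
    using sh[of "\<lambda>c. F (f (f c))"] sh2[of F] by simp
  define S where "S = (\<Sum>c\<in>A. x c ^ 2)"
  define P1 where "P1 = (\<Sum>c\<in>A. x c * x (f c))"
  define P2 where "P2 = (\<Sum>c\<in>A. x c * x (f (f c)))"
  have q1: "(\<Sum>c\<in>A. x (f c) ^ 2) = S" unfolding S_def by (rule sh)
  have q2: "(\<Sum>c\<in>A. x (f (f c)) ^ 2) = S" unfolding S_def by (rule sh2)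
  have q3: "(\<Sum>c\<in>A. x (f (f (f c))) ^ 2) = S" unfolding S_def by (rule sh3)
  have r1: "(\<Sum>c\<in>A. x (f (f c)) * x (f (f (f c)))) = P1" unfolding P1_def by (rule sh2)
  have r2: "(\<Sum>c\<in>A. x (f c) * x (f (f c))) = P1" unfolding P1_def by (rule sh)
  have r3: "(\<Sum>c\<in>A. x (f c) * x (f (f (f c)))) = P2" unfolding P2_def by (rule sh)
  have e1: "S = (\<Sum>c\<in>A. x (f (f (f c))) ^ 2 + x (f (f c)) ^ 2 - 2 * (x (f (f c)) * x (f (f (f c)))))"
    unfolding S_def
  proof (rule sum.cong)
    fix c assume "c \<in> A"
    then show "x c ^ 2 = x (f (f (f c))) ^ 2 + x (f (f c)) ^ 2 - 2 * (x (f (f c)) * x (f (f (f c))))"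
      by (simp add: rx power2_eq_square algebra_simps)
  qed simp
  also have "\<dots> = S + S - 2 * P1"
    by (simp only: sum.distrib sum_subtractf sum_distrib_left[symmetric] q3 q2 r1)
  finally have p1: "S = 2 * P1" by simp
  have e2: "P2 = (\<Sum>c\<in>A. x (f c) * x (f (f c)) + x c * x (f c))"
    unfolding r3[symmetric]
  proof (rule sum.cong)
    fix c assume "c \<in> A"
    then show "x (f c) * x (f (f (f c))) = x (f c) * x (f (f c)) + x c * x (f c)"
      by (simp add: rx algebra_simps)
  qed simp
  also have "\<dots> = P1 + P1"
    by (simp only: sum.distrib r2 P1_def[symmetric])
  finally have p2: "P2 = 2 * P1" by simp
  have e3: "S = (\<Sum>c\<in>A. x (f (f c)) ^ 2 + x c ^ 2 + 2 * (x c * x (f (f c))))"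
    unfolding q3[symmetric]
  proof (rule sum.cong)
    fix c assume "c \<in> A"
    then show "x (f (f (f c))) ^ 2 = x (f (f c)) ^ 2 + x c ^ 2 + 2 * (x c * x (f (f c)))"
      by (simp add: rx power2_eq_square algebra_simps)
  qed simp
  also have "\<dots> = S + S + 2 * P2"
    by (simp only: sum.distrib sum_distrib_left[symmetric] q2 S_def[symmetric] P2_def[symmetric])
  finally have S0: "S = 0" using p1 p2 by simp
  have x0: "x c = 0" if "c \<in> A" for c
  proof -
    have "\<forall>c\<in>A. x c ^ 2 = 0"
      using S0 unfolding S_def by (subst (asm) sum_nonneg_eq_0_iff[OF assms(1)]) auto
    then show ?thesis using that by simp
  qed
  have A1: "A \<subseteq> {1}"
  proof
    fix c assume "c \<in> A"
    then have "ln c = 0" "c > 0" using x0 assms(3) x_def by auto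
    then show "c \<in> {1}" by simp
  qed
  then have "A = {1}" using assms(2) by blast
  moreover have "f 1 = 1" using Ain[of 1] \<open>A = {1}\<close> by simp
  ultimately show "A = {1} \<and> f 1 = 1" by simp
qed

end
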